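(* Let $M_C$ be a deterministic classical Turing machine operating in time $f(n)$, where $n$ is the input size. Then there exists a (one-tape) classically-controlled quantum Turing machine $M_Q$ operating in time $O(f(n))$ such that for every input $x$, $M_C(x)=M_Q(\ket{x})$; here, when $M_C$ halts in the halting state $h$, this equality is to be read as $M_Q(\ket{x})=\ket{M_C(x)}$ (the final state of the quantum tape is the basis state encoding the final classical tape contents).
   Context: A deterministic Turing machine (TM) is a triple $M=(K,\Sigma,\delta)$: $K$ finite set of states with initial state $s$, $\Sigma$ finite alphabet containing a blank $\#$, and $\delta: K\times\Sigma\to (K\cup\{\text{yes},\text{no},h\})\times\Sigma\times\{\leftarrow,\rightarrow,-\}$, where yes, no, $h$ (halting states) are not in $K$. Its output $M(x)$ is yes or no if that state is reached, and the final tape contents if $h$ is reached. A (one-tape) classically-controlled quantum Turing machine (CQTM) is a quintuple $M=(K,\Sigma_C,\Sigma_Q,\mathcal A,\delta)$. $K$ is a finite set of classical states with initial state $s$; $\Sigma_Q$ is a finite alphabet containing a blank $\#$, whose symbols label an orthonormal basis $\{\ket{\tau}:\tau\in\Sigma_Q\}$ of the Hilbert space $\mathbb C^{|\Sigma_Q|}$ of each quantum cell of an infinite tape; $\Sigma_C$ is a finite alphabet of classical outcomes containing $\#$ and $\overline{\#}$; $\mathcal A$ is a finite set of one-cell admissible transformations, each being a family $\{M_c\}_{c}$ of linear operators on $\mathbb C^{|\Sigma_Q|}$ with $\sum_c M_c^\dagger M_c=\mathrm{Id}$ and all outcomes $c\in\Sigma_C$, and $\mathcal A$ contains the blank test $\mathcal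 T_\#=\{M_\#=\ket{\#}\bra{\#},\,M_{\overline\#}=I-\ket{\#}\bra{\#}\}$; and $\delta:K\times\Sigma_C\to(K\cup\{\text{yes},\text{no},h\})\times\{\leftarrow,\rightarrow,-\}\times\mathcal A$ is a total classical transition function. If the machine is in state $q$ with last outcome $\tau$ and $\delta(q,\tau)=(p,D,A)$, the head moves according to $D$, then $A=\{M_c\}$ is applied to the pointed cell: if the tape state is $\ket\psi$, outcome $c$ occurs with probability $\bra\psi M_c^\dagger M_c\ket\psi$ (with $M_c$ acting on the pointed cell) and the tape becomes $M_c\ket\psi$ normalized; the new state is $p$ and the last outcome is $c$. Each transition is one time step. Initially the input state (a superposition of basis states $\ket{\tau}$ with $\tau\in(\Sigma_Q\setminus\{\#\})^n$) occupies $n$ adjacent cells, all other cells are in $\ket{\#}$, the head points at the blank cell immediately left of the input, the state is $s$ and the last outcome is taken to be $\#$. The machine halts upon reaching yes, no, or $h$; the output is yes/no respectively, or, on $h$, the state of the tape segment from the leftmost cell not in $\ket\#$ to the rightmost cell not in $\ket\#$. *)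

theory Defs
  imports Complex_Main
begin

datatype dir = MoveL | MoveR | Stay

definition mv :: "dir \<Rightarrow> int" where
  "mv d = (case d of MoveL \<Rightarrow> -1 | MoveR \<Rightarrow> 1 | Stay \<Rightarrow> 0)"

datatype 'k hstate = St 'k | Yes | No | Halt

definition halted :: "'k hstate \<Rightarrow> bool" where
  "halted q = (case q of St _ \<Rightarrow> False | _ \<Rightarrow> True)"

datatype 'a result = RYes | RNo | RTape "'a list"

definition tape_segment :: "'b \<Rightarrow> (int \<Rightarrow> 'b) \<Rightarrow> 'b list" where
  "tape_segment b t =
     (if {i. t i \<noteq> b} = {} then []
      else map t [Min {i. t i \<noteq> b} .. Max {i. t i \<noteq> b}])"

definition input_tape :: "'b \<Rightarrow> 'b list \<Rightarrow> int \<Rightarrow> 'b" where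
  "input_tape b x i = (if 0 \<le> i \<and> i < int (length x) then x ! nat i else b)"

record ('k, 'a) tm =
  tm_start :: 'k
  tm_blank :: 'a
  tm_delta :: "'k \<Rightarrow> 'a \<Rightarrow> 'k hstate \<times> 'a \<times> dir"

type_synonym ('k, 'a) tm_conf = "'k hstate \<times> (int \<Rightarrow> 'a) \<times> int"

definition tm_step :: "('k, 'a) tm \<Rightarrow> ('k, 'a) tm_conf \<Rightarrow> ('k, 'a) tm_conf" where
  "tm_step M cf = (case cf of (q, t, pos) \<Rightarrow>
     (case q of
        St k \<Rightarrow> (case tm_delta M k (t pos) of (p, a, D) \<Rightarrow> (p, t(pos := a), pos + mv D))
      | _ \<Rightarrow> cf))"

definition tm_init :: "('k, 'a) tm \<Rightarrow> 'a list \<Rightarrow> ('k, 'a) tm_conf" where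
  "tm_init M x = (St (tm_start M), input_tape (tm_blank M) x, -1)"

definition tm_run :: "('k, 'a) tm \<Rightarrow> 'a list \<Rightarrow> nat \<Rightarrow> ('k, 'a) tm_conf" where
  "tm_run M x k = (tm_step M ^^ k) (tm_init M x)"

definition tm_halts_within :: "('k, 'a) tm \<Rightarrow> 'a list \<Rightarrow> nat \<Rightarrow> bool" where
  "tm_halts_within M x T = (\<exists>k\<le>T. halted (fst (tm_run M x k)))"

definition tm_conf_result :: "('k, 'a) tm \<Rightarrow> ('k, 'a) tm_conf \<Rightarrow> 'a result" where
  "tm_conf_result M cf = (case cf of (q, t, pos) \<Rightarrow>
     (case q of Yes \<Rightarrow> RYes | No \<Rightarrow> RNo | Halt \<Rightarrow> RTape (tape_segment (tm_blank M) t)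
      | St _ \<Rightarrow> undefined))"

definition tm_output :: "('k, 'a) tm \<Rightarrow> 'a list \<Rightarrow> 'a result" where
  "tm_output M x = tm_conf_result M (tm_run M x (LEAST k. halted (fst (tm_run M x k))))"

definition valid_input :: "('k, 'a) tm \<Rightarrow> 'a list \<Rightarrow> bool" where
  "valid_input M x = (\<forall>a\<in>set x. a \<noteq> tm_blank M)"

text \<open>Classical outcome labels: the two distinguished outcomes for the blank test,
  plus further labels.\<close>
datatype outc = OBlank | ONotBlank | OSym nat

text \<open>A one-cell operator on C^{|Sigma_Q|}, given by its matrix entries
  (row, column) indexed by quantum symbols.\<close>
type_synonym 'b qop = "'b \<Rightarrow> 'b \<Rightarrow> complex"

type_synonym 'b qfam = "outc \<Rightarrow> 'b qop"

record 'b cqtm =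
  cq_states   :: "nat set"
  cq_start    :: nat
  cq_outcomes :: "outc set"
  cq_alpha    :: "'b set"
  cq_blank    :: 'b
  cq_adm      :: "'b qfam set"
  cq_delta    :: "nat \<Rightarrow> outc \<Rightarrow> nat hstate \<times> dir \<times> 'b qfam"

definition admissible :: "outc set \<Rightarrow> 'b set \<Rightarrow> 'b qfam \<Rightarrow> bool" where
  "admissible SC SQ A \<longleftrightarrow>
     (\<forall>c. c \<notin> SC \<longrightarrow> (\<forall>r s. A c r s = 0)) \<and>
     (\<forall>c r s. r \<notin> SQ \<or> s \<notin> SQ \<longrightarrow> A c r s = 0) \<and>
     (\<forall>s\<in>SQ. \<forall>s'\<in>SQ.
        (\<Sum>c\<in>SC. \<Sum>r\<in>SQ. cnj (A c r s) * A c r s') = (if s = s' then 1 else 0))"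

definition blank_test :: "'b set \<Rightarrow> 'b \<Rightarrow> 'b qfam" where
  "blank_test SQ b c = (case c of
       OBlank \<Rightarrow> (\<lambda>r s. if r = b \<and> s = b then 1 else 0)
     | ONotBlank \<Rightarrow> (\<lambda>r s. if r = s \<and> r \<in> SQ \<and> r \<noteq> b then 1 else 0)
     | OSym _ \<Rightarrow> (\<lambda>r s. 0))"

definition wf_cqtm :: "'b cqtm \<Rightarrow> bool" where
  "wf_cqtm Q \<longleftrightarrow>
     finite (cq_states Q) \<and> cq_start Q \<in> cq_states Q \<and>
     finite (cq_outcomes Q) \<and> OBlank \<in> cq_outcomes Q \<and> ONotBlank \<in> cq_outcomes Q \<and>
     finite (cq_alpha Q) \<and> cq_blank Q \<in> cq_alpha Q \<and>
     finite (cq_adm Q) \<and>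
     (\<forall>A\<in>cq_adm Q. admissible (cq_outcomes Q) (cq_alpha Q) A) \<and>
     blank_test (cq_alpha Q) (cq_blank Q) \<in> cq_adm Q \<and>
     (\<forall>q\<in>cq_states Q. \<forall>c\<in>cq_outcomes Q.
        case cq_delta Q q c of (p, D, A) \<Rightarrow>
          (p \<in> St ` cq_states Q \<or> p = Yes \<or> p = No \<or> p = Halt) \<and> A \<in> cq_adm Q)"

text \<open>Tape states: (finitely supported) vectors over the basis of tape configurations.\<close>
type_synonym 'b qtape = "(int \<Rightarrow> 'b) \<Rightarrow> complex"

definition qnorm :: "'b qtape \<Rightarrow> real" where
  "qnorm \<psi> = sqrt (\<Sum>t\<in>{t. \<psi> t \<noteq> 0}. (cmod (\<psi> t))\<^sup>2)"

definition apply_op :: "'b set \<Rightarrow> 'b qop \<Rightarrow> int \<Rightarrow> 'b qtape \<Rightarrow> 'b qtape" where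
  "apply_op SQ M p \<psi> = (\<lambda>t. \<Sum>s\<in>SQ. M (t p) s * \<psi> (t(p := s)))"

definition qscale :: "complex \<Rightarrow> 'b qtape \<Rightarrow> 'b qtape" where
  "qscale a \<psi> = (\<lambda>t. a * \<psi> t)"

definition basis_tape :: "(int \<Rightarrow> 'b) \<Rightarrow> 'b qtape" where
  "basis_tape t0 = (\<lambda>t. if t = t0 then 1 else 0)"

text \<open>Configurations: classical state, head position, last outcome, tape state.\<close>
type_synonym 'b cq_conf = "nat hstate \<times> int \<times> outc \<times> 'b qtape"

definition cq_succ :: "'b cqtm \<Rightarrow> 'b cq_conf \<Rightarrow> 'b cq_conf \<Rightarrow> bool" where
  "cq_succ Q cf cf' \<longleftrightarrow>
     (\<exists>q pos c \<psi> p D A c'.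
        cf = (St q, pos, c, \<psi>) \<and> cq_delta Q q c = (p, D, A) \<and> c' \<in> cq_outcomes Q \<and>
        (let \<psi>1 = apply_op (cq_alpha Q) (A c') (pos + mv D) \<psi> in
           (qnorm \<psi>1)\<^sup>2 > 0 \<and>
           cf' = (p, pos + mv D, c', qscale (complex_of_real (1 / qnorm \<psi>1)) \<psi>1)))"

definition cq_init :: "'b cqtm \<Rightarrow> 'b list \<Rightarrow> 'b cq_conf" where
  "cq_init Q x = (St (cq_start Q), -1, OBlank, basis_tape (input_tape (cq_blank Q) x))"

text \<open>Configurations reachable with positive probability after exactly k steps.\<close>
inductive cq_reach :: "'b cqtm \<Rightarrow> 'b list \<Rightarrow> nat \<Rightarrow> 'b cq_conf \<Rightarrow> bool"
  for Q x where
  init: "cq_reach Q x 0 (cq_init Q x)"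
| step: "cq_reach Q x k cf \<Longrightarrow> cq_succ Q cf cf' \<Longrightarrow> cq_reach Q x (Suc k) cf'"

definition cq_halts_within :: "'b cqtm \<Rightarrow> 'b list \<Rightarrow> real \<Rightarrow> bool" where
  "cq_halts_within Q x T \<longleftrightarrow> (\<forall>k cf. cq_reach Q x k cf \<longrightarrow> real k \<le> T)"

text \<open>The output of a halting configuration equals r: yes/no by the halting state; for h,
  the tape is (up to global phase) the basis state whose segment between leftmost and
  rightmost non-blank cells is the string w.\<close>
definition cq_conf_output_is :: "'b cqtm \<Rightarrow> 'b cq_conf \<Rightarrow> 'b result \<Rightarrow> bool" where
  "cq_conf_output_is Q cf r \<longleftrightarrow>
     (case cf of (q, pos, c, \<psi>) \<Rightarrow>
        (q = Yes \<and> r = RYes) \<or> (q = No \<and> r = RNo) \<or>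
        (q = Halt \<and> (\<exists>w. r = RTape w \<and>
            (\<exists>\<alpha> t. cmod \<alpha> = 1 \<and> \<psi> = qscale \<alpha> (basis_tape t) \<and>
                    tape_segment (cq_blank Q) t = w))))"

definition cq_output_is :: "'b cqtm \<Rightarrow> 'b list \<Rightarrow> 'b result \<Rightarrow> bool" where
  "cq_output_is Q x r \<longleftrightarrow>
     (\<exists>T. cq_halts_within Q x T) \<and>
     (\<forall>k q pos c \<psi>. cq_reach Q x k (q, pos, c, \<psi>) \<longrightarrow> halted q \<longrightarrow>
         cq_conf_output_is Q (q, pos, c, \<psi>) r)"

definition map_result :: "('a \<Rightarrow> 'b) \<Rightarrow> 'a result \<Rightarrow> 'b result" where
  "map_result g r = (case r of RYes \<Rightarrow> RYes | RNo \<Rightarrow> RNo | RTape w \<Rightarrow> RTape (map g w))"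

end

theory Submission
  imports Defs "HOL-Library.Countable_Set"
begin

lemma finite_dir: "finite (UNIV :: dir set)"
proof -
  have "UNIV = {MoveL, MoveR, Stay}" by (auto intro: dir.exhaust)
  then show ?thesis by (metis finite.emptyI finite.insertI)
qed

lemma finite_ctrl: "finite (UNIV :: ('k::finite \<times> dir option) set)"
  using finite_dir by (simp add: finite_prod UNIV_option_conv)

definition encS :: "'k \<times> dir option \<Rightarrow> nat" where "encS = to_nat_on UNIV"
definition encA :: "'a \<Rightarrow> nat" where "encA = to_nat_on UNIV"
definition decA :: "nat \<Rightarrow> 'a" where "decA = from_nat_into UNIV"

lemma decA_encA[simp]: "decA (encA (a::'a::finite)) = a"
  unfolding decA_def encA_def by (rule from_nat_into_to_nat_on) (simp_all add: countable_finite)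

lemma inj_encA: "inj (encA :: 'a::finite \<Rightarrow> nat)"
  unfolding encA_def by (rule inj_on_to_nat_on) (simp add: countable_finite)

lemma encA_eq[simp]: "(encA (a::'a::finite) = encA b) = (a = b)"
  using inj_encA by (auto dest: injD)

lemma inj_encS: "inj (encS :: 'k::finite \<times> dir option \<Rightarrow> nat)"
  unfolding encS_def by (metis countable_finite finite_ctrl inj_on_to_nat_on)

lemma encS_eq[simp]: "(encS (a::'k::finite \<times> dir option) = encS b) = (a = b)"
  using inj_encS by (auto dest: injD)

lemma decS_encS[simp]: "from_nat_into UNIV (encS (a::'k::finite \<times> dir option)) = a"
  unfolding encS_def by (metis countable_finite finite_ctrl from_nat_into_to_nat_on UNIV_I)

definition hm :: "'k hstate \<Rightarrow> dir \<Rightarrow> nat hstate" where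
  "hm p D = (case p of St p' \<Rightarrow> St (encS (p', Some D)) | Yes \<Rightarrow> Yes | No \<Rightarrow> No | Halt \<Rightarrow> Halt)"

definition SCa :: "('a \<Rightarrow> nat) \<Rightarrow> outc set" where
  "SCa g = insert OBlank (insert ONotBlank (OSym ` range g))"

definition measF :: "('a + nat) qfam" where
  "measF c r s = (case s of Inl a \<Rightarrow> if c = OSym (encA a) \<and> r = s then 1 else 0 | Inr _ \<Rightarrow> 0)"

definition writeF :: "'a \<Rightarrow> ('a + nat) qfam" where
  "writeF b c r s = (case s of Inl a \<Rightarrow> if c = OSym (encA a) \<and> r = Inl b then 1 else 0 | Inr _ \<Rightarrow> 0)"

definition dq :: "('k, 'a) tm \<Rightarrow> 'k \<times> dir option \<Rightarrow> outc \<Rightarrow> nat hstate \<times> dir \<times> ('a + nat) qfam" where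
  "dq M kd c = (case kd of
      (k, None) \<Rightarrow> (case c of OSym j \<Rightarrow> (case tm_delta M k (decA j) of (p, b, D) \<Rightarrow> (hm p D, Stay, writeF b))
                     | _ \<Rightarrow> (Halt, Stay, blank_test (range Inl) (Inl (tm_blank M))))
    | (k, Some D) \<Rightarrow> (St (encS (k, None)), D, measF))"

definition QM :: "('k, 'a) tm \<Rightarrow> ('a + nat) cqtm" where
  "QM M = \<lparr> cq_states = range (encS :: 'k \<times> dir option \<Rightarrow> nat),
            cq_start = encS (tm_start M, Some Stay),
            cq_outcomes = SCa (encA :: 'a \<Rightarrow> nat),
            cq_alpha = range Inl,
            cq_blank = Inl (tm_blank M),
            cq_adm = insert (blank_test (range Inl) (Inl (tm_blank M))) (insert measF (range writeF)),
            cq_delta = (\<lambda>n c. dq M (from_nat_into UNIV n) c) \<rparr>"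

section \<open>Admissibility\<close>

lemma OSym_SCa[simp]: "OSym (g a) \<in> SCa g" "OBlank \<in> SCa g" "ONotBlank \<in> SCa g"
  by (auto simp: SCa_def)


lemma sum_Inl: "(\<Sum>r\<in>range Inl. g r) = (\<Sum>a\<in>UNIV. g (Inl a))"
  by (simp add: sum.reindex)

lemma adm_meas: "admissible (SCa (encA :: 'a::finite \<Rightarrow> nat)) (range Inl) (measF :: ('a + nat) qfam)"
  unfolding admissible_def
proof (intro conjI)
  show "\<forall>c. c \<notin> SCa (encA :: 'a \<Rightarrow> nat) \<longrightarrow> (\<forall>r s. (measF :: ('a + nat) qfam) c r s = 0)"
    by (auto simp: measF_def split: sum.splits)
  show "\<forall>c r s. r \<notin> range Inl \<or> s \<notin> range Inl \<longrightarrow> (measF :: ('a + nat) qfam) c r s = 0"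
    by (auto simp: measF_def split: sum.splits)
  show "\<forall>s\<in>range Inl. \<forall>s'\<in>range Inl.
     (\<Sum>c\<in>SCa (encA :: 'a \<Rightarrow> nat). \<Sum>r\<in>range Inl. cnj ((measF :: ('a + nat) qfam) c r s) * measF c r s') = (if s = s' then 1 else 0)"
  proof (intro ballI)
    fix s s' :: "'a + nat" assume "s \<in> range Inl" "s' \<in> range Inl"
    then obtain a a' where s: "s = Inl a" "s' = Inl a'" by auto
    have "(\<Sum>r\<in>range Inl. cnj ((measF :: ('a + nat) qfam) c r s) * measF c r s') =
          (if a = a' \<and> c = OSym (encA a) then 1 else 0)" for c
    proof -
      have "cnj ((measF :: ('a + nat) qfam) c (Inl r) s) * measF c (Inl r) s' =
            (if r = a then (if a = a' \<and> c = OSym (encA a) then 1 else 0) else 0)" for r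
        unfolding s measF_def by auto
      then show ?thesis unfolding sum_Inl by simp
    qed
    then have "(\<Sum>c\<in>SCa (encA :: 'a \<Rightarrow> nat). \<Sum>r\<in>range Inl. cnj ((measF :: ('a + nat) qfam) c r s) * measF c r s') =
       (\<Sum>c\<in>SCa (encA :: 'a \<Rightarrow> nat). if c = OSym (encA a) then (if a = a' then 1 else 0) else 0)"
      by (intro sum.cong) auto
    also have "\<dots> = (if s = s' then 1 else 0)"
      by (simp add: SCa_def s)
    finally show "(\<Sum>c\<in>SCa (encA :: 'a \<Rightarrow> nat). \<Sum>r\<in>range Inl. cnj ((measF :: ('a + nat) qfam) c r s) * measF c r s') = (if s = s' then 1 else 0)" .
  qed
qed

lemma adm_write: "admissible (SCa (encA :: 'a::finite \<Rightarrow> nat)) (range Inl) (writeF b :: ('a + nat) qfam)"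
  unfolding admissible_def
proof (intro conjI)
  show "\<forall>c. c \<notin> SCa (encA :: 'a \<Rightarrow> nat) \<longrightarrow> (\<forall>r s. (writeF b :: ('a + nat) qfam) c r s = 0)"
    by (auto simp: writeF_def split: sum.splits)
  show "\<forall>c r s. r \<notin> range Inl \<or> s \<notin> range Inl \<longrightarrow> (writeF b :: ('a + nat) qfam) c r s = 0"
    by (auto simp: writeF_def split: sum.splits)
  show "\<forall>s\<in>range Inl. \<forall>s'\<in>range Inl.
     (\<Sum>c\<in>SCa (encA :: 'a \<Rightarrow> nat). \<Sum>r\<in>range Inl. cnj ((writeF b :: ('a + nat) qfam) c r s) * writeF b c r s') = (if s = s' then 1 else 0)"
  proof (intro ballI)
    fix s s' :: "'a + nat" assume "s \<in> range Inl" "s' \<in> range Inl"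
    then obtain a a' where s: "s = Inl a" "s' = Inl a'" by auto
    have "(\<Sum>r\<in>range Inl. cnj ((writeF b :: ('a + nat) qfam) c r s) * writeF b c r s') =
          (if a = a' \<and> c = OSym (encA a) then 1 else 0)" for c
    proof -
      have "cnj ((writeF b :: ('a + nat) qfam) c (Inl r) s) * writeF b c (Inl r) s' =
            (if r = b then (if a = a' \<and> c = OSym (encA a) then 1 else 0) else 0)" for r
        unfolding s writeF_def by auto
      then show ?thesis unfolding sum_Inl by simp
    qed
    then have "(\<Sum>c\<in>SCa (encA :: 'a \<Rightarrow> nat). \<Sum>r\<in>range Inl. cnj ((writeF b :: ('a + nat) qfam) c r s) * writeF b c r s') =
       (\<Sum>c\<in>SCa (encA :: 'a \<Rightarrow> nat). if c = OSym (encA a) then (if a = a' then 1 else 0) else 0)"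
      by (intro sum.cong) auto
    also have "\<dots> = (if s = s' then 1 else 0)"
      by (simp add: SCa_def s)
    finally show "(\<Sum>c\<in>SCa (encA :: 'a \<Rightarrow> nat). \<Sum>r\<in>range Inl. cnj ((writeF b :: ('a + nat) qfam) c r s) * writeF b c r s') = (if s = s' then 1 else 0)" .
  qed
qed

lemma sum_insert2: "finite B \<Longrightarrow> x \<notin> B \<Longrightarrow> y \<notin> B \<Longrightarrow> x \<noteq> y \<Longrightarrow>
  sum g (insert x (insert y B)) = g x + (g y + sum g B)"
  by simp

lemma adm_blank: "admissible (SCa (encA :: 'a::finite \<Rightarrow> nat)) (range Inl) (blank_test (range Inl) (Inl bl) :: ('a + nat) qfam)"
  unfolding admissible_def
proof (intro conjI)
  show "\<forall>c. c \<notin> SCa (encA :: 'a \<Rightarrow> nat) \<longrightarrow> (\<forall>r s. (blank_test (range Inl) (Inl bl) :: ('a + nat) qfam) c r s = 0)"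
    by (auto simp: blank_test_def split: outc.splits)
  show "\<forall>c r s. r \<notin> range Inl \<or> s \<notin> range Inl \<longrightarrow> (blank_test (range Inl) (Inl bl) :: ('a + nat) qfam) c r s = 0"
    by (auto simp: blank_test_def split: outc.splits)
  show "\<forall>s\<in>range Inl. \<forall>s'\<in>range Inl.
     (\<Sum>c\<in>SCa (encA :: 'a \<Rightarrow> nat). \<Sum>r\<in>range Inl. cnj ((blank_test (range Inl) (Inl bl) :: ('a + nat) qfam) c r s) * blank_test (range Inl) (Inl bl) c r s') = (if s = s' then 1 else 0)"
  proof (intro ballI)
    fix s s' :: "'a + nat" assume "s \<in> range Inl" "s' \<in> range Inl"
    then obtain a a' where s: "s = Inl a" "s' = Inl a'" by auto
    define T where "T = (blank_test (range Inl) (Inl bl) :: ('a + nat) qfam)"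
    have h1: "(\<Sum>r\<in>range Inl. cnj (T OBlank r s) * T OBlank r s') = (if a = bl \<and> a' = bl then 1 else 0)"
    proof -
      have "cnj (T OBlank (Inl r) s) * T OBlank (Inl r) s' =
            (if r = bl then (if a = bl \<and> a' = bl then 1 else 0) else 0)" for r
        unfolding s T_def blank_test_def by auto
      then show ?thesis unfolding sum_Inl by simp
    qed
    have h2: "(\<Sum>r\<in>range Inl. cnj (T ONotBlank r s) * T ONotBlank r s') = (if a = a' \<and> a \<noteq> bl then 1 else 0)"
    proof -
      have "cnj (T ONotBlank (Inl r) s) * T ONotBlank (Inl r) s' =
            (if r = a then (if a = a' \<and> a \<noteq> bl then 1 else 0) else 0)" for r
        unfolding s T_def blank_test_def by auto
      then show ?thesis unfolding sum_Inl by simp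
    qed
    have h3: "(\<Sum>c\<in>OSym ` range (encA :: 'a \<Rightarrow> nat). \<Sum>r\<in>range Inl. cnj (T c r s) * T c r s') = 0"
      by (intro sum.neutral) (auto simp: T_def blank_test_def)
    have "(\<Sum>c\<in>SCa (encA :: 'a \<Rightarrow> nat). \<Sum>r\<in>range Inl. cnj (T c r s) * T c r s') =
       (\<Sum>r\<in>range Inl. cnj (T OBlank r s) * T OBlank r s') + (\<Sum>r\<in>range Inl. cnj (T ONotBlank r s) * T ONotBlank r s')
        + (\<Sum>c\<in>OSym ` range (encA :: 'a \<Rightarrow> nat). \<Sum>r\<in>range Inl. cnj (T c r s) * T c r s')"
    proof -
      have "finite (OSym ` range (encA :: 'a \<Rightarrow> nat))" by (intro finite_imageI finite_UNIV)
      then show ?thesis unfolding SCa_def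
        by (subst sum_insert2) (auto simp: add.assoc)
    qed
    also have "\<dots> = (if s = s' then 1 else 0)" by (simp only: h1 h2 h3) (auto simp: s)
    finally show "(\<Sum>c\<in>SCa (encA :: 'a \<Rightarrow> nat). \<Sum>r\<in>range Inl. cnj ((blank_test (range Inl) (Inl bl) :: ('a + nat) qfam) c r s) * blank_test (range Inl) (Inl bl) c r s') = (if s = s' then 1 else 0)"
      unfolding T_def .
  qed
qed

lemma wf_QM: "wf_cqtm (QM (M :: ('k::finite, 'a::finite) tm))"
proof -
  have fS: "finite (range (encS :: 'k \<times> dir option \<Rightarrow> nat))" by (rule finite_imageI[OF finite_ctrl])
  have fC: "finite (SCa (encA :: 'a \<Rightarrow> nat))" by (simp add: SCa_def)
  have dl: "case dq M kd c of (p, D, A) \<Rightarrow>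
          (p \<in> St ` range (encS :: 'k \<times> dir option \<Rightarrow> nat) \<or> p = Yes \<or> p = No \<or> p = Halt) \<and>
          A \<in> insert (blank_test (range Inl) (Inl (tm_blank M))) (insert measF (range writeF))" for kd c
    by (auto simp: dq_def hm_def split: prod.splits option.splits outc.splits hstate.splits)
  show ?thesis unfolding wf_cqtm_def QM_def
    using fS fC dl adm_meas adm_write adm_blank by auto
qed

lemma qnorm_basis[simp]: "qnorm (basis_tape t) = 1"
proof -
  have "{t'. basis_tape t t' \<noteq> 0} = {t}" by (auto simp: basis_tape_def)
  then show ?thesis by (simp add: qnorm_def basis_tape_def)
qed

lemma qnorm_zero[simp]: "qnorm (\<lambda>_. 0) = 0"
  by (simp add: qnorm_def)

lemma qscale_one[simp]: "qscale 1 \<psi> = \<psi>"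
  by (simp add: qscale_def)

lemma apply_op_basis:
  assumes "finite SQ" "u p \<in> SQ"
  shows "apply_op SQ M p (basis_tape u) = (\<lambda>t. if t(p := u p) = u then M (t p) (u p) else 0)"
proof
  fix t
  have "M (t p) s * basis_tape u (t(p := s)) =
        (if s = u p then (if t(p := u p) = u then M (t p) (u p) else 0) else 0)" for s
  proof -
    have "(t(p := s) = u) = (s = u p \<and> t(p := u p) = u)"
      by (auto simp: fun_eq_iff)
    then show ?thesis by (auto simp: basis_tape_def)
  qed
  then show "apply_op SQ M p (basis_tape u) t = (if t(p := u p) = u then M (t p) (u p) else 0)"
    unfolding apply_op_def using assms by simp
qed

lemma apply_op_basis_unit:
  assumes "finite SQ" "u p \<in> SQ" "\<And>r. M r (u p) = (if r = r0 then 1 else 0)"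
  shows "apply_op SQ M p (basis_tape u) = basis_tape (u(p := r0))"
proof -
  have "(t(p := u p) = u \<and> t p = r0) = (t = u(p := r0))" for t
    by (auto simp: fun_eq_iff)
  note eq = this
  have "apply_op SQ M p (basis_tape u) = (\<lambda>t. if t(p := u p) = u then M (t p) (u p) else 0)"
    by (rule apply_op_basis) (rule assms)+
  also have "\<dots> = basis_tape (u(p := r0))"
  proof
    fix t
    show "(if t(p := u p) = u then M (t p) (u p) else 0) = basis_tape (u(p := r0)) t"
      using eq[of t] unfolding assms(3) basis_tape_def by auto
  qed
  finally show ?thesis .
qed

lemma apply_op_basis_zero:
  assumes "finite SQ" "u p \<in> SQ" "\<And>r. M r (u p) = 0"
  shows "apply_op SQ M p (basis_tape u) = (\<lambda>_. 0)"
proof -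
  have "apply_op SQ M p (basis_tape u) = (\<lambda>t. if t(p := u p) = u then M (t p) (u p) else 0)"
    by (rule apply_op_basis) (rule assms)+
  then show ?thesis using assms(3) by (simp add: fun_eq_iff)
qed

lemma tm_run_0: "tm_run M x 0 = tm_init M x"
  by (simp add: tm_run_def)

lemma tm_run_Suc: "tm_run M x (Suc j) = tm_step M (tm_run M x j)"
  by (simp add: tm_run_def)

lemma halted_stable:
  assumes "halted (fst (tm_run M x a))"
  shows "tm_run M x (a + m) = tm_run M x a"
proof (induction m)
  case 0 then show ?case by simp
next
  case (Suc m)
  have "tm_run M x (a + Suc m) = tm_step M (tm_run M x (a + m))" by (simp add: tm_run_Suc)
  also have "\<dots> = tm_step M (tm_run M x a)" using Suc by simp
  also have "\<dots> = tm_run M x a" using assms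
    by (cases "tm_run M x a") (auto simp: tm_step_def halted_def split: hstate.splits)
  finally show ?case .
qed

lemma halted_stable':
  assumes "halted (fst (tm_run M x a))" "a \<le> b"
  shows "tm_run M x b = tm_run M x a"
  using halted_stable[OF assms(1), of "b - a"] assms(2) by simp

lemma tm_output_eq:
  assumes "halted (fst (tm_run M x j))"
  shows "tm_output M x = tm_conf_result M (tm_run M x j)"
proof -
  let ?L = "LEAST k. halted (fst (tm_run M x k))"
  have "halted (fst (tm_run M x ?L))" using assms by (rule LeastI)
  moreover have "?L \<le> j" using assms by (rule Least_le)
  ultimately show ?thesis unfolding tm_output_def using halted_stable' by metis
qed

lemma not_halted_lt:
  assumes "halted (fst (tm_run M x K))" "\<not> halted (fst (tm_run M x j))"
  shows "j < K"
  using halted_stable'[OF assms(1), of j] assms by force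

lemma tape_segment_Inl:
  "tape_segment (Inl b) (Inl \<circ> t) = map Inl (tape_segment b t)"
proof -
  have "{i. (Inl \<circ> t) i \<noteq> (Inl b :: 'a + 'c)} = {i. t i \<noteq> b}" by auto
  then show ?thesis unfolding tape_segment_def by auto
qed

lemma input_tape_Inl: "input_tape (Inl b) (map Inl x) = Inl \<circ> input_tape b x"
  by (auto simp: input_tape_def fun_eq_iff)

section \<open>Simulation invariant\<close>

definition Inv :: "('k, 'a) tm \<Rightarrow> 'a list \<Rightarrow> nat \<Rightarrow> ('a + nat) cq_conf \<Rightarrow> bool" where
  "Inv M x k cf \<longleftrightarrow>
   (\<exists>j p' t pos0 D c. k = 2*j \<and> tm_run M x j = (St p', t, pos0 + mv D) \<and>
       cf = (St (encS (p', Some D)), pos0, c, basis_tape (Inl \<circ> t)))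
 \<or> (\<exists>j q t pos. k = 2*j+1 \<and> tm_run M x j = (St q, t, pos) \<and>
       cf = (St (encS (q, None)), pos, OSym (encA (t pos)), basis_tape (Inl \<circ> t)))
 \<or> (\<exists>j q t pos h t' pos' pos1 c D. k = 2*j+2 \<and> tm_run M x j = (St q, t, pos) \<and>
       tm_run M x (Suc j) = (h, t', pos') \<and> halted h \<and> cf = (hm h D, pos1, c, basis_tape (Inl \<circ> t')))"

lemma Inv_step:
  fixes M :: "('k::finite, 'a::finite) tm"
  assumes inv: "Inv M x k cf" and su: "cq_succ (QM M) cf cf'"
  shows "Inv M x (Suc k) cf'"
proof -
  obtain q pos c \<psi> p D A c' where cf: "cf = (St q, pos, c, \<psi>)"
    and dl: "dq M (from_nat_into UNIV q) c = (p, D, A)"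
    and c': "c' \<in> SCa (encA :: 'a \<Rightarrow> nat)"
    and pos: "(qnorm (apply_op (range Inl) (A c') (pos + mv D) \<psi>))\<^sup>2 > 0"
    and cf': "cf' = (p, pos + mv D, c', qscale (complex_of_real (1 / qnorm (apply_op (range Inl) (A c') (pos + mv D) \<psi>))) (apply_op (range Inl) (A c') (pos + mv D) \<psi>))"
    using su unfolding cq_succ_def QM_def Let_def by auto
  from inv[unfolded Inv_def] show ?thesis
  proof (elim disjE exE conjE)
    fix j p' t pos0 D0 c0
    assume k: "k = 2*j" and run: "tm_run M x j = (St p', t, pos0 + mv D0)"
      and cfe: "cf = (St (encS (p', Some D0)), pos0, c0, basis_tape (Inl \<circ> t))"
    then have q: "q = encS (p', Some D0)" "pos = pos0" "c = c0" "\<psi> = basis_tape (Inl \<circ> t)" using cf by auto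
    have pDA: "p = St (encS (p', None))" "D = D0" "A = measF" using dl q by (auto simp: dq_def)
    let ?P = "pos0 + mv D0"
    have ce: "c' = OSym (encA (t ?P))"
    proof (rule ccontr)
      assume ne: "c' \<noteq> OSym (encA (t ?P))"
      have "apply_op (range Inl) (measF c') ?P (basis_tape (Inl \<circ> t)) = (\<lambda>_. 0)"
        by (rule apply_op_basis_zero) (use ne in \<open>auto simp: measF_def\<close>)
      then show False using pos q pDA by simp
    qed
    have ap: "apply_op (range Inl) (measF c') ?P (basis_tape (Inl \<circ> t)) = basis_tape (Inl \<circ> t)"
    proof -
      have "apply_op (range Inl) (measF c') ?P (basis_tape (Inl \<circ> t)) = basis_tape ((Inl \<circ> t)(?P := Inl (t ?P)))"
        by (rule apply_op_basis_unit) (auto simp: measF_def ce)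
      moreover have "(Inl \<circ> t)(?P := Inl (t ?P)) = (Inl \<circ> t :: int \<Rightarrow> 'a + nat)" by (auto simp: fun_eq_iff)
      ultimately show ?thesis by simp
    qed
    have "cf' = (St (encS (p', None)), ?P, OSym (encA (t ?P)), basis_tape (Inl \<circ> t))"
      using cf' q pDA ap ce by simp
    then have "Suc k = 2*j+1 \<and> tm_run M x j = (St p', t, ?P) \<and> cf' = (St (encS (p', None)), ?P, OSym (encA (t ?P)), basis_tape (Inl \<circ> t))"
      using k run by simp
    then show ?thesis unfolding Inv_def by blast
  next
    fix j q0 t pos0
    assume k: "k = 2*j+1" and run: "tm_run M x j = (St q0, t, pos0)"
      and cfe: "cf = (St (encS (q0, None)), pos0, OSym (encA (t pos0)), basis_tape (Inl \<circ> t))"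
    then have q: "q = encS (q0, None)" "pos = pos0" "c = OSym (encA (t pos0))" "\<psi> = basis_tape (Inl \<circ> t)" using cf by auto
    obtain p0 b D0 where td: "tm_delta M q0 (t pos0) = (p0, b, D0)" by (metis prod_cases3)
    have pDA: "p = hm p0 D0" "D = Stay" "A = writeF b" using dl q td by (auto simp: dq_def)
    have ce: "c' = OSym (encA (t pos0))"
    proof (rule ccontr)
      assume ne: "c' \<noteq> OSym (encA (t pos0))"
      have "apply_op (range Inl) (writeF b c') pos0 (basis_tape (Inl \<circ> t)) = (\<lambda>_. 0)"
        by (rule apply_op_basis_zero) (use ne in \<open>auto simp: writeF_def\<close>)
      then show False using pos q pDA by (simp add: mv_def)
    qed
    have ap: "apply_op (range Inl) (writeF b c') pos0 (basis_tape (Inl \<circ> t)) = basis_tape (Inl \<circ> t(pos0 := b))"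
    proof -
      have "apply_op (range Inl) (writeF b c') pos0 (basis_tape (Inl \<circ> t)) = basis_tape ((Inl \<circ> t)(pos0 := Inl b))"
        by (rule apply_op_basis_unit) (auto simp: writeF_def ce)
      moreover have "(Inl \<circ> t)(pos0 := Inl b) = (Inl \<circ> t(pos0 := b) :: int \<Rightarrow> 'a + nat)" by (auto simp: fun_eq_iff)
      ultimately show ?thesis by simp
    qed
    have cfe': "cf' = (hm p0 D0, pos0, c', basis_tape (Inl \<circ> t(pos0 := b)))"
      using cf' q pDA ap by (simp add: mv_def)
    have run': "tm_run M x (Suc j) = (p0, t(pos0 := b), pos0 + mv D0)"
      using run td by (simp add: tm_run_Suc tm_step_def)
    show ?thesis
    proof (cases p0)
      case (St p'')
      have "cf' = (St (encS (p'', Some D0)), pos0, c', basis_tape (Inl \<circ> t(pos0 := b)))"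
        using cfe' St by (simp add: hm_def)
      then have "Suc k = 2 * Suc j \<and> tm_run M x (Suc j) = (St p'', t(pos0 := b), pos0 + mv D0) \<and>
        cf' = (St (encS (p'', Some D0)), pos0, c', basis_tape (Inl \<circ> t(pos0 := b)))"
        using k run' St by simp
      then show ?thesis unfolding Inv_def by blast
    next
      case Yes
      then have "Suc k = 2*j+2 \<and> tm_run M x j = (St q0, t, pos0) \<and> tm_run M x (Suc j) = (p0, t(pos0 := b), pos0 + mv D0)
        \<and> halted p0 \<and> cf' = (hm p0 D0, pos0, c', basis_tape (Inl \<circ> t(pos0 := b)))"
        using k run run' cfe' by (simp add: halted_def)
      then show ?thesis unfolding Inv_def by blast
    next
      case No
      then have "Suc k = 2*j+2 \<and> tm_run M x j = (St q0, t, pos0) \<and> tm_run M x (Suc j) = (p0, t(pos0 := b), pos0 + mv D0)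
        \<and> halted p0 \<and> cf' = (hm p0 D0, pos0, c', basis_tape (Inl \<circ> t(pos0 := b)))"
        using k run run' cfe' by (simp add: halted_def)
      then show ?thesis unfolding Inv_def by blast
    next
      case Halt
      then have "Suc k = 2*j+2 \<and> tm_run M x j = (St q0, t, pos0) \<and> tm_run M x (Suc j) = (p0, t(pos0 := b), pos0 + mv D0)
        \<and> halted p0 \<and> cf' = (hm p0 D0, pos0, c', basis_tape (Inl \<circ> t(pos0 := b)))"
        using k run run' cfe' by (simp add: halted_def)
      then show ?thesis unfolding Inv_def by blast
    qed
  next
    fix j q0 t pos0 h t' pos' pos1 c0 D0
    assume "halted h" "cf = (hm h D0, pos1, c0, basis_tape (Inl \<circ> t'))"
    then show ?thesis using cf by (auto simp: hm_def halted_def split: hstate.splits)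
  qed
qed

lemma Inv_reach:
  fixes M :: "('k::finite, 'a::finite) tm"
  assumes "cq_reach (QM M) (map Inl x) k cf"
  shows "Inv M x k cf"
  using assms
proof (induction rule: cq_reach.induct)
  case init
  have "0 = 2 * (0::nat) \<and> tm_run M x 0 = (St (tm_start M), input_tape (tm_blank M) x, -1 + mv Stay) \<and>
     cq_init (QM M) (map Inl x) = (St (encS (tm_start M, Some Stay)), -1, OBlank, basis_tape (Inl \<circ> input_tape (tm_blank M) x))"
    by (simp add: tm_run_0 tm_init_def mv_def cq_init_def QM_def input_tape_Inl)
  then show ?case unfolding Inv_def by blast
next
  case (step k cf cf')
  then show ?case using Inv_step by blast
qed

lemma reach_bound:
  fixes M :: "('k::finite, 'a::finite) tm"
  assumes hK: "halted (fst (tm_run M x K))" and r: "cq_reach (QM M) (map Inl x) k cf"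
  shows "k \<le> 2 * K"
proof -
  have "Inv M x k cf" using r by (rule Inv_reach)
  then show ?thesis unfolding Inv_def
  proof (elim disjE exE conjE)
    fix j p' t pos0 D c
    assume "k = 2*j" "tm_run M x j = (St p', t, pos0 + mv D)"
    moreover then have "j < K" using not_halted_lt[OF hK, of j] by (simp add: halted_def)
    ultimately show ?thesis by simp
  next
    fix j q t pos
    assume "k = 2*j+1" "tm_run M x j = (St q, t, pos)"
    moreover then have "j < K" using not_halted_lt[OF hK, of j] by (simp add: halted_def)
    ultimately show ?thesis by simp
  next
    fix j q t pos h t' pos' pos1 c D
    assume "k = 2*j+2" "tm_run M x j = (St q, t, pos)"
    moreover then have "j < K" using not_halted_lt[OF hK, of j] by (simp add: halted_def)
    ultimately show ?thesis by simp
  qed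
qed

lemma reach_output:
  fixes M :: "('k::finite, 'a::finite) tm"
  assumes r: "cq_reach (QM M) (map Inl x) k (q, pos, c, \<psi>)" and hq: "halted q"
  shows "cq_conf_output_is (QM M) (q, pos, c, \<psi>) (map_result Inl (tm_output M x))"
proof -
  have "Inv M x k (q, pos, c, \<psi>)" using r by (rule Inv_reach)
  then show ?thesis unfolding Inv_def
  proof (elim disjE exE conjE)
    fix j p' t pos0 D c'
    assume "(q, pos, c, \<psi>) = (St (encS (p', Some D)), pos0, c', basis_tape (Inl \<circ> t))"
    then show ?thesis using hq by (simp add: halted_def)
  next
    fix j q' t pos'
    assume "(q, pos, c, \<psi>) = (St (encS (q', None)), pos', OSym (encA (t pos')), basis_tape (Inl \<circ> t))"
    then show ?thesis using hq by (simp add: halted_def)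
  next
    fix j q0 t pos0 h t' pos' pos1 c' D
    assume run': "tm_run M x (Suc j) = (h, t', pos')" and hh: "halted h"
      and cfe: "(q, pos, c, \<psi>) = (hm h D, pos1, c', basis_tape (Inl \<circ> t'))"
    have out: "tm_output M x = tm_conf_result M (h, t', pos')"
      using tm_output_eq[of M x "Suc j"] run' hh by simp
    show ?thesis
    proof (cases h)
      case (St x1) then show ?thesis using hh by (simp add: halted_def)
    next
      case Yes then show ?thesis using cfe out
        by (simp add: cq_conf_output_is_def hm_def tm_conf_result_def map_result_def)
    next
      case No then show ?thesis using cfe out
        by (simp add: cq_conf_output_is_def hm_def tm_conf_result_def map_result_def)
    next
      case Halt
      have "\<psi> = qscale 1 (basis_tape (Inl \<circ> t'))" using cfe by simp
      moreover have "tape_segment (cq_blank (QM M)) (Inl \<circ> t') = map Inl (tape_segment (tm_blank M) t')"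
        by (simp add: QM_def tape_segment_Inl)
      ultimately have w: "\<exists>\<alpha> tt. cmod \<alpha> = 1 \<and> \<psi> = qscale \<alpha> (basis_tape tt) \<and>
          tape_segment (cq_blank (QM M)) tt = map Inl (tape_segment (tm_blank M) t')"
        by (intro exI[of _ 1] exI[of _ "Inl \<circ> t'"]) simp
      show ?thesis using w cfe out Halt
        by (auto simp: cq_conf_output_is_def hm_def tm_conf_result_def map_result_def)
    qed
  qed
qed

theorem theorem1:
  fixes MC :: "('k::finite, 'a::finite) tm" and f :: "nat \<Rightarrow> nat"
  assumes "\<forall>x. valid_input MC x \<longrightarrow> tm_halts_within MC x (f (length x))"
  shows "\<exists>MQ :: ('a + nat) cqtm.
           wf_cqtm MQ \<and> range Inl \<subseteq> cq_alpha MQ \<and> cq_blank MQ = Inl (tm_blank MC) \<and>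
           (\<exists>C::real. \<exists>N. \<forall>x. valid_input MC x \<and> length x \<ge> N \<longrightarrow>
               cq_halts_within MQ (map Inl x) (C * real (f (length x)))) \<and>
           (\<forall>x. valid_input MC x \<longrightarrow>
               cq_output_is MQ (map Inl x) (map_result Inl (tm_output MC x)))"
proof -
  have hw: "cq_halts_within (QM MC) (map Inl x) (2 * real (f (length x)))" if v: "valid_input MC x" for x
  proof -
    obtain K where K: "K \<le> f (length x)" "halted (fst (tm_run MC x K))"
      using assms v unfolding tm_halts_within_def by blast
    show ?thesis unfolding cq_halts_within_def
    proof (intro allI impI)
      fix k cf assume "cq_reach (QM MC) (map Inl x) k cf"
      then have "k \<le> 2 * K" using reach_bound[OF K(2)] by blast
      then show "real k \<le> 2 * real (f (length x))" using K(1) by linarith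
    qed
  qed
  have "wf_cqtm (QM MC) \<and> range Inl \<subseteq> cq_alpha (QM MC) \<and> cq_blank (QM MC) = Inl (tm_blank MC) \<and>
           (\<exists>C::real. \<exists>N. \<forall>x. valid_input MC x \<and> length x \<ge> N \<longrightarrow>
               cq_halts_within (QM MC) (map Inl x) (C * real (f (length x)))) \<and>
           (\<forall>x. valid_input MC x \<longrightarrow>
               cq_output_is (QM MC) (map Inl x) (map_result Inl (tm_output MC x)))"
  proof (intro conjI)
    show "wf_cqtm (QM MC)" by (rule wf_QM)
    show "range Inl \<subseteq> cq_alpha (QM MC)" by (simp add: QM_def)
    show "cq_blank (QM MC) = Inl (tm_blank MC)" by (simp add: QM_def)
    show "\<exists>C::real. \<exists>N. \<forall>x. valid_input MC x \<and> length x \<ge> N \<longrightarrow>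
               cq_halts_within (QM MC) (map Inl x) (C * real (f (length x)))"
      using hw by blast
    show "\<forall>x. valid_input MC x \<longrightarrow> cq_output_is (QM MC) (map Inl x) (map_result Inl (tm_output MC x))"
      using hw reach_output unfolding cq_output_is_def by blast
  qed
  then show ?thesis by blast
qed

end
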